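(* Let $S$ be a finite $p$-group, let $\mathbb{W}(S)$ be the set of elementary abelian normal subgroups $A$ of $S$ such that for every $s\in S$, $[A,s,s]=\{1\}$ implies $[A,s]=\{1\}$, and let $W(S)=\langle \mathbb{W}(S)\rangle$. Then: (i) $W(S)$ is a characteristic subgroup of $S$; (ii) $W(S)\in\mathbb{W}(S)$, and it is the unique largest member of $\mathbb{W}(S)$ with respect to inclusion; (iii) $\Omega(Z(S))\le W(S)$; (iv) if $W(S)\le T\le S$ then $W(S)\le W(T)$.
   Context: $\Omega(X)$ denotes the subgroup generated by elements of order $p$ in $X$; $[A,s,s]=[[A,s],s]$. *)

theory Defs
  imports "HOL-Algebra.Algebra"
begin

definition gcomm :: "('a, 'b) monoid_scheme \<Rightarrow> 'a \<Rightarrow> 'a \<Rightarrow> 'a" where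
  "gcomm G x y = inv\<^bsub>G\<^esub> x \<otimes>\<^bsub>G\<^esub> inv\<^bsub>G\<^esub> y \<otimes>\<^bsub>G\<^esub> x \<otimes>\<^bsub>G\<^esub> y"

definition comm_elt_sub :: "('a, 'b) monoid_scheme \<Rightarrow> 'a set \<Rightarrow> 'a \<Rightarrow> 'a set" where
  "comm_elt_sub G H s = generate G {gcomm G h s | h. h \<in> H}"

definition p_group :: "('a, 'b) monoid_scheme \<Rightarrow> nat \<Rightarrow> bool" where
  "p_group G p \<longleftrightarrow> group G \<and> Factorial_Ring.prime p \<and> finite (carrier G) \<and> (\<exists>n. card (carrier G) = p ^ n)"

definition elem_abelian_sub :: "('a, 'b) monoid_scheme \<Rightarrow> nat \<Rightarrow> 'a set \<Rightarrow> bool" where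
  "elem_abelian_sub G p A \<longleftrightarrow> subgroup A G \<and>
     (\<forall>x\<in>A. \<forall>y\<in>A. x \<otimes>\<^bsub>G\<^esub> y = y \<otimes>\<^bsub>G\<^esub> x) \<and>
     (\<forall>x\<in>A. x [^]\<^bsub>G\<^esub> p = \<one>\<^bsub>G\<^esub>)"

definition WW :: "('a, 'b) monoid_scheme \<Rightarrow> nat \<Rightarrow> 'a set set" where
  "WW G p = {A. A \<lhd> G \<and> elem_abelian_sub G p A \<and>
     (\<forall>s\<in>carrier G. comm_elt_sub G (comm_elt_sub G A s) s = {\<one>\<^bsub>G\<^esub>}
                    \<longrightarrow> comm_elt_sub G A s = {\<one>\<^bsub>G\<^esub>})}"

definition Wsub :: "('a, 'b) monoid_scheme \<Rightarrow> nat \<Rightarrow> 'a set" where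
  "Wsub G p = generate G (\<Union> (WW G p))"

definition characteristic :: "('a, 'b) monoid_scheme \<Rightarrow> 'a set \<Rightarrow> bool" where
  "characteristic G H \<longleftrightarrow> subgroup H G \<and> (\<forall>\<phi>\<in>iso G G. \<phi> ` H = H)"

definition center :: "('a, 'b) monoid_scheme \<Rightarrow> 'a set" where
  "center G = {z \<in> carrier G. \<forall>g\<in>carrier G. z \<otimes>\<^bsub>G\<^esub> g = g \<otimes>\<^bsub>G\<^esub> z}"

definition OmegaP :: "('a, 'b) monoid_scheme \<Rightarrow> nat \<Rightarrow> 'a set \<Rightarrow> 'a set" where
  "OmegaP G p Y = generate G {x \<in> Y. Multiplicative_Group.group.ord G x = p}"

end

theory Submission
  imports Defs
begin


context group
begin

lemma gcomm_closed[simp]: "x \<in> carrier G \<Longrightarrow> y \<in> carrier G \<Longrightarrow> gcomm G x y \<in> carrier G"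
  unfolding gcomm_def by simp

lemma gcomm_one_iff:
  assumes "x \<in> carrier G" "y \<in> carrier G"
  shows "gcomm G x y = \<one> \<longleftrightarrow> x \<otimes> y = y \<otimes> x"
proof -
  have e: "gcomm G x y = inv (y \<otimes> x) \<otimes> (x \<otimes> y)"
    using assms by (simp add: gcomm_def inv_mult_group m_assoc)
  show ?thesis unfolding e
    by (metis assms inv_closed inv_inv m_closed inv_equality r_inv l_inv)
qed

lemma generate_sub_one: "Y \<subseteq> {\<one>} \<Longrightarrow> generate G Y = {\<one>}"
  using generate_subgroup_incl[OF _ triv_subgroup] generate.one by blast

lemma comm_elt_sub_carrier:
  "H \<subseteq> carrier G \<Longrightarrow> s \<in> carrier G \<Longrightarrow> comm_elt_sub G H s \<subseteq> carrier G"
  unfolding comm_elt_sub_def using generate_in_carrier[of "{gcomm G h s |h. h \<in> H}"] by force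

lemma comm_elt_sub_triv_iff:
  assumes "H \<subseteq> carrier G" "s \<in> carrier G"
  shows "comm_elt_sub G H s = {\<one>} \<longleftrightarrow> (\<forall>h\<in>H. h \<otimes> s = s \<otimes> h)"
proof
  assume a: "comm_elt_sub G H s = {\<one>}"
  show "\<forall>h\<in>H. h \<otimes> s = s \<otimes> h"
  proof
    fix h assume h: "h \<in> H"
    have "gcomm G h s \<in> comm_elt_sub G H s" unfolding comm_elt_sub_def
      using h by (intro generate.incl) blast
    then show "h \<otimes> s = s \<otimes> h" using a gcomm_one_iff assms h by blast
  qed
next
  assume a: "\<forall>h\<in>H. h \<otimes> s = s \<otimes> h"
  have "{gcomm G h s |h. h \<in> H} \<subseteq> {\<one>}" using a gcomm_one_iff assms by blast
  then show "comm_elt_sub G H s = {\<one>}" unfolding comm_elt_sub_def by (rule generate_sub_one)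
qed

lemma comm_elt_sub_mono: "H \<subseteq> K \<Longrightarrow> K \<subseteq> carrier G \<Longrightarrow> s \<in> carrier G \<Longrightarrow> comm_elt_sub G H s \<subseteq> comm_elt_sub G K s"
  unfolding comm_elt_sub_def by (rule mono_generate) blast

lemma WW_iff:
  "A \<in> WW G p \<longleftrightarrow> A \<lhd> G \<and> elem_abelian_sub G p A \<and>
     (\<forall>s\<in>carrier G. (\<forall>x\<in>comm_elt_sub G A s. x \<otimes> s = s \<otimes> x) \<longrightarrow> (\<forall>a\<in>A. a \<otimes> s = s \<otimes> a))"
proof (cases "A \<lhd> G")
  case True
  then have Ac: "A \<subseteq> carrier G" by (simp add: normal_imp_subgroup subgroup.subset)
  have eq: "(comm_elt_sub G (comm_elt_sub G A s) s = {\<one>} \<longrightarrow> comm_elt_sub G A s = {\<one>}) \<longleftrightarrow>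
     ((\<forall>x\<in>comm_elt_sub G A s. x \<otimes> s = s \<otimes> x) \<longrightarrow> (\<forall>a\<in>A. a \<otimes> s = s \<otimes> a))"
    if s: "s \<in> carrier G" for s
    using comm_elt_sub_triv_iff[OF Ac s] comm_elt_sub_triv_iff[OF comm_elt_sub_carrier[OF Ac s] s]
    by (simp only:)
  have b: "(\<forall>s\<in>carrier G. comm_elt_sub G (comm_elt_sub G A s) s = {\<one>} \<longrightarrow> comm_elt_sub G A s = {\<one>}) \<longleftrightarrow>
     (\<forall>s\<in>carrier G. (\<forall>x\<in>comm_elt_sub G A s. x \<otimes> s = s \<otimes> x) \<longrightarrow> (\<forall>a\<in>A. a \<otimes> s = s \<otimes> a))"
    by (rule ball_cong[OF refl eq])
  show ?thesis by (simp only: WW_def mem_Collect_eq b)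
next
  case False
  then show ?thesis unfolding WW_def mem_Collect_eq by (simp only: simp_thms)
qed

lemma WW_cond:
  assumes "A \<in> WW G p" "s \<in> carrier G" "\<forall>x\<in>comm_elt_sub G A s. x \<otimes> s = s \<otimes> x" "a \<in> A"
  shows "a \<otimes> s = s \<otimes> a"
proof -
  have "\<forall>s\<in>carrier G. (\<forall>x\<in>comm_elt_sub G A s. x \<otimes> s = s \<otimes> x) \<longrightarrow> (\<forall>a\<in>A. a \<otimes> s = s \<otimes> a)"
    using iffD1[OF WW_iff assms(1)] by (rule conjunct2[THEN conjunct2])
  then show ?thesis using assms(2-4) by blast
qed

lemma comm_mult: "x \<in> carrier G \<Longrightarrow> y \<in> carrier G \<Longrightarrow> z \<in> carrier G \<Longrightarrow>
   x \<otimes> y = y \<otimes> x \<Longrightarrow> x \<otimes> z = z \<otimes> x \<Longrightarrow> x \<otimes> (y \<otimes> z) = (y \<otimes> z) \<otimes> x"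
  by (metis m_assoc)

lemma WW_commute:
  assumes A: "A \<in> WW G p" and B: "B \<in> WW G p" and a: "a \<in> A" and b: "b \<in> B"
  shows "a \<otimes> b = b \<otimes> a"
proof -
  have nA: "A \<lhd> G" and nB: "B \<lhd> G" using A B unfolding WW_def by auto
  have AB: "elem_abelian_sub G p B" using B unfolding WW_def by auto
  have Ac: "A \<subseteq> carrier G" "B \<subseteq> carrier G" using nA nB by (simp_all add: normal_imp_subgroup subgroup.subset)
  have bc: "b \<in> carrier G" using b Ac by auto
  have sub: "comm_elt_sub G A b \<subseteq> B"
    unfolding comm_elt_sub_def
  proof (rule generate_subgroup_incl)
    show "subgroup B G" using nB normal_imp_subgroup by blast
    show "{gcomm G h b |h. h \<in> A} \<subseteq> B"
    proof clarify
      fix h assume h: "h \<in> A"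
      have hc: "h \<in> carrier G" using h Ac by auto
      have ib: "inv b \<in> B" using nB b by (simp add: normal_imp_subgroup subgroup.m_inv_closed)
      have "inv h \<otimes> inv b \<otimes> inv (inv h) \<in> B"
        using nB ib hc normal_inv_iff by blast
      then have "inv h \<otimes> inv b \<otimes> h \<in> B" using hc by simp
      then have "inv h \<otimes> inv b \<otimes> h \<otimes> b \<in> B"
        using b hc nB by (simp add: normal_imp_subgroup subgroup.m_closed)
      then show "gcomm G h b \<in> B" unfolding gcomm_def .
    qed
  qed
  have "\<forall>x\<in>comm_elt_sub G A b. x \<otimes> b = b \<otimes> x"
    using sub AB b unfolding elem_abelian_sub_def by blast
  then show ?thesis using WW_cond[OF A bc _ a] by blast
qed

end


context group
begin

lemma WW_normal: "A \<in> WW G p \<Longrightarrow> A \<lhd> G" unfolding WW_def by auto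
lemma WW_carrier: "A \<in> WW G p \<Longrightarrow> A \<subseteq> carrier G"
  using WW_normal normal_imp_subgroup subgroup.subset by blast

lemma WW_prod:
  assumes A: "A \<in> WW G p" and B: "B \<in> WW G p"
  shows "A <#> B \<in> WW G p"
proof -
  have nA: "A \<lhd> G" and nB: "B \<lhd> G" using A B WW_normal by auto
  have Ac: "A \<subseteq> carrier G" and Bc: "B \<subseteq> carrier G" using A B WW_carrier by auto
  have eA: "elem_abelian_sub G p A" and eB: "elem_abelian_sub G p B" using A B unfolding WW_def by auto
  have nAB: "A <#> B \<lhd> G" using nA nB normal_subgroup_set_mult_closed by blast
  have ABc: "A <#> B \<subseteq> carrier G" using nAB normal_imp_subgroup subgroup.subset by blast
  have cAB: "\<And>a b. a \<in> A \<Longrightarrow> b \<in> B \<Longrightarrow> a \<otimes> b = b \<otimes> a" using WW_commute A B by blast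
  have cAA: "\<And>a b. a \<in> A \<Longrightarrow> b \<in> A \<Longrightarrow> a \<otimes> b = b \<otimes> a" using eA unfolding elem_abelian_sub_def by blast
  have cBB: "\<And>a b. a \<in> B \<Longrightarrow> b \<in> B \<Longrightarrow> a \<otimes> b = b \<otimes> a" using eB unfolding elem_abelian_sub_def by blast
  have comm: "x \<otimes> y = y \<otimes> x" if x: "x \<in> A <#> B" and y: "y \<in> A <#> B" for x y
  proof -
    obtain a b where ab: "a \<in> A" "b \<in> B" "x = a \<otimes> b" using x unfolding set_mult_def by auto
    obtain a' b' where ab': "a' \<in> A" "b' \<in> B" "y = a' \<otimes> b'" using y unfolding set_mult_def by auto
    have c: "a \<in> carrier G" "b \<in> carrier G" "a' \<in> carrier G" "b' \<in> carrier G" using ab ab' Ac Bc by auto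
    have "a' \<otimes> (a \<otimes> b) = (a \<otimes> b) \<otimes> a'"
      by (rule comm_mult) (use c cAA[OF ab'(1) ab(1)] cAB[OF ab'(1) ab(2)] in auto)
    moreover have "b' \<otimes> (a \<otimes> b) = (a \<otimes> b) \<otimes> b'"
      by (rule comm_mult) (use c cAB[OF ab(1) ab'(2)] cBB[OF ab'(2) ab(2)] in auto)
    ultimately have "x \<otimes> (a' \<otimes> b') = (a' \<otimes> b') \<otimes> x" unfolding ab(3)
      by (intro comm_mult) (use c in auto)
    then show ?thesis unfolding ab'(3) .
  qed
  have pw: "x [^] p = \<one>" if x: "x \<in> A <#> B" for x
  proof -
    obtain a b where ab: "a \<in> A" "b \<in> B" "x = a \<otimes> b" using x unfolding set_mult_def by auto
    have c: "a \<in> carrier G" "b \<in> carrier G" using ab Ac Bc by auto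
    have "x [^] p = a [^] p \<otimes> b [^] p" using ab c cAB[OF ab(1,2)] pow_mult_distrib[of a b p] by simp
    then show ?thesis using eA eB ab unfolding elem_abelian_sub_def by simp
  qed
  have AsAB: "A \<subseteq> A <#> B"
  proof
    fix a assume "a \<in> A"
    then have "a \<otimes> \<one> \<in> A <#> B" unfolding set_mult_def
      using nB normal_imp_subgroup subgroup.one_closed by fastforce
    then show "a \<in> A <#> B" using \<open>a \<in> A\<close> Ac by auto
  qed
  have BsAB: "B \<subseteq> A <#> B"
  proof
    fix b assume "b \<in> B"
    then have "\<one> \<otimes> b \<in> A <#> B" unfolding set_mult_def
      using nA normal_imp_subgroup subgroup.one_closed by fastforce
    then show "b \<in> A <#> B" using \<open>b \<in> B\<close> Bc by auto
  qed
  have cond: "\<forall>z\<in>A <#> B. z \<otimes> s = s \<otimes> z"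
    if s: "s \<in> carrier G" and h: "\<forall>x\<in>comm_elt_sub G (A <#> B) s. x \<otimes> s = s \<otimes> x" for s
  proof
    have "\<forall>x\<in>comm_elt_sub G A s. x \<otimes> s = s \<otimes> x"
      using h comm_elt_sub_mono[OF AsAB ABc s] by blast
    then have ha: "\<forall>a\<in>A. a \<otimes> s = s \<otimes> a" using WW_cond[OF A s] by blast
    have "\<forall>x\<in>comm_elt_sub G B s. x \<otimes> s = s \<otimes> x"
      using h comm_elt_sub_mono[OF BsAB ABc s] by blast
    then have hb: "\<forall>b\<in>B. b \<otimes> s = s \<otimes> b" using WW_cond[OF B s] by blast
    fix z assume "z \<in> A <#> B"
    then obtain a b where ab: "a \<in> A" "b \<in> B" "z = a \<otimes> b" unfolding set_mult_def by auto
    have c: "a \<in> carrier G" "b \<in> carrier G" using ab Ac Bc by auto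
    have "s \<otimes> (a \<otimes> b) = (a \<otimes> b) \<otimes> s"
      by (rule comm_mult) (use c s ha hb ab in auto)
    then show "z \<otimes> s = s \<otimes> z" unfolding ab(3) by simp
  qed
  have "subgroup (A <#> B) G" using nAB normal_imp_subgroup by blast
  then have "elem_abelian_sub G p (A <#> B)" unfolding elem_abelian_sub_def
    using comm pw by simp
  then show ?thesis apply (rule WW_iff[THEN iffD2, OF conjI[OF nAB conjI]]) using cond by blast
qed

lemma WW_one: "{\<one>} \<in> WW G p"
  apply (rule WW_iff[THEN iffD2, OF conjI[OF one_is_normal conjI]])
  unfolding elem_abelian_sub_def using one_is_normal normal_imp_subgroup by auto

lemma WW_max:
  assumes fin: "finite (carrier G)"
  shows "Wsub G p \<in> WW G p \<and> (\<forall>A\<in>WW G p. A \<subseteq> Wsub G p)"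
proof -
  have "WW G p \<subseteq> Pow (carrier G)" by (rule subsetI, rule PowI, rule WW_carrier)
  then have f: "finite (WW G p)" by (rule finite_subset) (simp add: fin)
  obtain M where M: "M \<in> WW G p" "\<forall>B\<in>WW G p. M \<subseteq> B \<longrightarrow> M = B"
    using finite_has_maximal[OF f] WW_one by (metis empty_iff)
  have all: "A \<subseteq> M" if A: "A \<in> WW G p" for A
  proof -
    have "M <#> A \<in> WW G p" using WW_prod M(1) A by blast
    moreover have "M \<subseteq> M <#> A"
    proof
      fix m assume "m \<in> M"
      then have "m \<otimes> \<one> \<in> M <#> A" unfolding set_mult_def
        using WW_normal[OF A] normal_imp_subgroup subgroup.one_closed by fastforce
      then show "m \<in> M <#> A" using \<open>m \<in> M\<close> WW_carrier[OF M(1)] by auto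
    qed
    ultimately have e: "M = M <#> A" using M(2) by blast
    show "A \<subseteq> M"
    proof
      fix a assume "a \<in> A"
      then have "\<one> \<otimes> a \<in> M <#> A" unfolding set_mult_def
        using WW_normal[OF M(1)] normal_imp_subgroup subgroup.one_closed by fastforce
      then show "a \<in> M" using \<open>a \<in> A\<close> WW_carrier[OF A] e by auto
    qed
  qed
  have "Wsub G p = M"
  proof
    show "Wsub G p \<subseteq> M" unfolding Wsub_def
    proof (rule generate_subgroup_incl)
      show "\<Union> (WW G p) \<subseteq> M" by (rule Union_least) (rule all)
      show "subgroup M G" by (rule normal_imp_subgroup[OF WW_normal[OF M(1)]])
    qed
    show "M \<subseteq> Wsub G p" unfolding Wsub_def
      by (rule subsetI, rule generate.incl, rule UnionI[OF M(1)])
  qed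
  then show ?thesis using M all by auto
qed

end


context group
begin

lemma gcomm_hom:
  assumes "\<phi> \<in> hom G G" "x \<in> carrier G" "y \<in> carrier G"
  shows "gcomm G (\<phi> x) (\<phi> y) = \<phi> (gcomm G x y)"
proof -
  interpret h: group_hom G G \<phi> by (unfold_locales) (use assms in simp)
  show ?thesis unfolding gcomm_def using assms by simp
qed

lemma WW_iso:
  assumes phi: "\<phi> \<in> iso G G" and A: "A \<in> WW G p"
  shows "\<phi> ` A \<in> WW G p"
proof -
  have hom: "\<phi> \<in> hom G G" by (rule iso_imp_homomorphism[OF phi])
  interpret h: group_hom G G \<phi> by (unfold_locales) (use hom in simp)
  have surj: "\<phi> ` carrier G = carrier G" and inj: "inj_on \<phi> (carrier G)"
    using phi unfolding iso_iff by auto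
  have Ac: "A \<subseteq> carrier G" using A WW_carrier by blast
  have nA: "A \<lhd> G" using A WW_normal by blast
  have eA: "elem_abelian_sub G p A" using A unfolding WW_def by blast
  have n: "\<phi> ` A \<lhd> G" using iso_normal_subgroup[OF phi group_axioms group_axioms nA] .
  have e: "elem_abelian_sub G p (\<phi> ` A)"
    unfolding elem_abelian_sub_def
  proof (intro conjI ballI)
    show "subgroup (\<phi> ` A) G" using n normal_imp_subgroup by blast
  next
    fix x y assume "x \<in> \<phi> ` A" "y \<in> \<phi> ` A"
    then obtain a b where ab: "a \<in> A" "b \<in> A" "x = \<phi> a" "y = \<phi> b" by blast
    have "a \<otimes> b = b \<otimes> a" using eA ab unfolding elem_abelian_sub_def by blast
    then show "x \<otimes> y = y \<otimes> x" using ab Ac by (metis h.hom_mult subsetD)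
  next
    fix x assume "x \<in> \<phi> ` A"
    then obtain a where a: "a \<in> A" "x = \<phi> a" by blast
    have "a [^] p = \<one>" using eA a unfolding elem_abelian_sub_def by blast
    then show "x [^] p = \<one>" using a Ac h.hom_nat_pow[of a p] by auto
  qed
  have c: "\<forall>y\<in>\<phi> ` A. y \<otimes> s = s \<otimes> y"
    if s: "s \<in> carrier G" and hyp: "\<forall>x\<in>comm_elt_sub G (\<phi> ` A) s. x \<otimes> s = s \<otimes> x" for s
  proof -
    have "s \<in> \<phi> ` carrier G" using s surj by simp
    then obtain t where t: "t \<in> carrier G" "s = \<phi> t" by (rule imageE) auto
    have set_eq: "{gcomm G h (\<phi> t) |h. h \<in> \<phi> ` A} = \<phi> ` {gcomm G a t |a. a \<in> A}"
    proof (intro subset_antisym subsetI)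
      fix x assume "x \<in> {gcomm G h (\<phi> t) |h. h \<in> \<phi> ` A}"
      then obtain a where a: "a \<in> A" "x = gcomm G (\<phi> a) (\<phi> t)" by auto
      then have "x = \<phi> (gcomm G a t)" using gcomm_hom[OF hom _ t(1)] Ac by auto
      then show "x \<in> \<phi> ` {gcomm G a t |a. a \<in> A}" using a(1) by auto
    next
      fix x assume "x \<in> \<phi> ` {gcomm G a t |a. a \<in> A}"
      then obtain a where a: "a \<in> A" "x = \<phi> (gcomm G a t)" by auto
      then have "x = gcomm G (\<phi> a) (\<phi> t)" using gcomm_hom[OF hom _ t(1)] Ac by auto
      then show "x \<in> {gcomm G h (\<phi> t) |h. h \<in> \<phi> ` A}" using a(1) by auto
    qed
    have gsub: "{gcomm G a t |a. a \<in> A} \<subseteq> carrier G" using Ac t by auto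
    have ceq: "comm_elt_sub G (\<phi> ` A) s = \<phi> ` comm_elt_sub G A t"
      unfolding comm_elt_sub_def t(2) set_eq using h.generate_img[OF gsub] by simp
    have "\<forall>x'\<in>comm_elt_sub G A t. x' \<otimes> t = t \<otimes> x'"
    proof
      fix x' assume x': "x' \<in> comm_elt_sub G A t"
      have x'c: "x' \<in> carrier G" using comm_elt_sub_carrier[OF Ac t(1)] x' by blast
      have "\<phi> x' \<otimes> \<phi> t = \<phi> t \<otimes> \<phi> x'" using hyp x' ceq t by blast
      then have "\<phi> (x' \<otimes> t) = \<phi> (t \<otimes> x')" using x'c t by simp
      then show "x' \<otimes> t = t \<otimes> x'" using inj x'c t by (simp add: inj_on_def)
    qed
    then have "\<forall>a\<in>A. a \<otimes> t = t \<otimes> a" using WW_cond[OF A t(1)] by blast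
    then show ?thesis using t Ac by (auto simp flip: h.hom_mult)
  qed
  show ?thesis
    by (rule WW_iff[THEN iffD2, OF conjI[OF n conjI[OF e]]]) (use c in blast)
qed

lemma Omega_WW:
  assumes p: "Factorial_Ring.prime p"
  shows "generate G {x \<in> center G. ord x = p} \<in> WW G p"
proof -
  define Y where "Y = {x \<in> center G. ord x = p}"
  have Xc: "Y \<subseteq> carrier G" unfolding Y_def center_def by auto
  have P: "y \<in> carrier G \<and> (\<forall>g\<in>carrier G. y \<otimes> g = g \<otimes> y) \<and> y [^] p = \<one>"
    if "y \<in> generate G Y" for y
    using that
  proof (induction rule: generate.induct)
    case one then show ?case by simp
  next
    case (incl h)
    then have "h \<in> carrier G" "\<forall>g\<in>carrier G. h \<otimes> g = g \<otimes> h" "ord h = p"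
      unfolding Y_def center_def by auto
    then show ?case using pow_ord_eq_1 by metis
  next
    case (inv h)
    then have h: "h \<in> carrier G" "\<forall>g\<in>carrier G. h \<otimes> g = g \<otimes> h" "ord h = p"
      unfolding Y_def center_def by auto
    have "inv h \<otimes> g = g \<otimes> inv h" if g: "g \<in> carrier G" for g
    proof -
      have hg: "h \<otimes> g = g \<otimes> h" using h g by blast
      have "g \<otimes> inv h = inv h \<otimes> (h \<otimes> g) \<otimes> inv h" using h(1) g by (simp add: m_assoc[symmetric])
      also have "\<dots> = inv h \<otimes> (g \<otimes> h) \<otimes> inv h" using hg by simp
      also have "\<dots> = inv h \<otimes> g" using h(1) g by (simp add: m_assoc)
      finally show ?thesis by simp
    qed
    moreover have "inv h [^] p = \<one>" using h nat_pow_inv pow_ord_eq_1 by (metis inv_one)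
    ultimately show ?case using h by simp
  next
    case (eng h1 h2)
    have c: "h1 \<otimes> h2 = h2 \<otimes> h1" using eng by blast
    have "(h1 \<otimes> h2) [^] p = h1 [^] p \<otimes> h2 [^] p" using c eng pow_mult_distrib by blast
    moreover have "\<forall>g\<in>carrier G. (h1 \<otimes> h2) \<otimes> g = g \<otimes> (h1 \<otimes> h2)"
      using eng by (metis m_assoc)
    moreover have "h1 \<in> carrier G" "h2 \<in> carrier G" "h1 [^] p = \<one>" "h2 [^] p = \<one>"
      using eng by blast+
    ultimately show ?case by (simp only: m_closed one_closed r_one simp_thms)
  qed
  have sg: "subgroup (generate G Y) G" using generate_is_subgroup[OF Xc] .
  have n: "generate G Y \<lhd> G" unfolding normal_inv_iff
  proof (intro conjI sg ballI)
    fix x h assume x: "x \<in> carrier G" and h: "h \<in> generate G Y"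
    have "x \<otimes> h \<otimes> inv x = h \<otimes> x \<otimes> inv x" using P[OF h] x by metis
    also have "\<dots> = h" using conjunct1[OF P[OF h]] x by (simp add: m_assoc)
    finally show "x \<otimes> h \<otimes> inv x \<in> generate G Y" using h by simp
  qed
  have e: "elem_abelian_sub G p (generate G Y)"
    unfolding elem_abelian_sub_def using sg P by blast
  show ?thesis unfolding Y_def[symmetric]
    by (rule WW_iff[THEN iffD2, OF conjI[OF n conjI[OF e]]]) (use P in blast)
qed

lemma gcomm_consistent:
  assumes "subgroup T G" "x \<in> T" "y \<in> T"
  shows "gcomm (G\<lparr>carrier := T\<rparr>) x y = gcomm G x y"
  unfolding gcomm_def using assms by simp

lemma comm_elt_sub_consistent:
  assumes T: "subgroup T G" and Y: "Y \<subseteq> T" and s: "s \<in> T"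
  shows "comm_elt_sub (G\<lparr>carrier := T\<rparr>) Y s = comm_elt_sub G Y s"
proof -
  have eq: "{gcomm (G\<lparr>carrier := T\<rparr>) h s |h. h \<in> Y} = {gcomm G h s |h. h \<in> Y}"
  proof (intro subset_antisym subsetI)
    fix x assume "x \<in> {gcomm (G\<lparr>carrier := T\<rparr>) h s |h. h \<in> Y}"
    then obtain h where h: "h \<in> Y" "x = gcomm (G\<lparr>carrier := T\<rparr>) h s" by auto
    then have "x = gcomm G h s" using gcomm_consistent[OF T _ s] Y by auto
    then show "x \<in> {gcomm G h s |h. h \<in> Y}" using h(1) by auto
  next
    fix x assume "x \<in> {gcomm G h s |h. h \<in> Y}"
    then obtain h where h: "h \<in> Y" "x = gcomm G h s" by auto
    then have "x = gcomm (G\<lparr>carrier := T\<rparr>) h s" using gcomm_consistent[OF T _ s] Y by auto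
    then show "x \<in> {gcomm (G\<lparr>carrier := T\<rparr>) h s |h. h \<in> Y}" using h(1) by auto
  qed
  have sub: "{gcomm G h s |h. h \<in> Y} \<subseteq> T"
  proof clarify
    fix h assume "h \<in> Y"
    then have h: "h \<in> T" using Y by blast
    show "gcomm G h s \<in> T" unfolding gcomm_def
      using h s T by (intro subgroup.m_closed subgroup.m_inv_closed; assumption?)+
  qed
  show ?thesis unfolding comm_elt_sub_def eq using generate_consistent[OF sub T] .
qed

lemma comm_elt_sub_in_subgroup:
  assumes T: "subgroup T G" and Y: "Y \<subseteq> T" and s: "s \<in> T"
  shows "comm_elt_sub G Y s \<subseteq> T"
proof -
  have sub: "{gcomm G h s |h. h \<in> Y} \<subseteq> T"
  proof clarify
    fix h assume "h \<in> Y"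
    then have h: "h \<in> T" using Y by blast
    show "gcomm G h s \<in> T" unfolding gcomm_def
      using h s T by (intro subgroup.m_closed subgroup.m_inv_closed; assumption?)+
  qed
  show ?thesis unfolding comm_elt_sub_def using generate_subgroup_incl[OF sub T] .
qed

lemma WW_restrict:
  assumes T: "subgroup T G" and A: "A \<in> WW G p" and AT: "A \<subseteq> T"
  shows "A \<in> WW (G\<lparr>carrier := T\<rparr>) p"
proof -
  have nA: "A \<lhd> G" using A WW_normal by blast
  have n: "A \<lhd> G\<lparr>carrier := T\<rparr>" using normal_restrict_supergroup[OF T nA AT] .
  have eA: "elem_abelian_sub G p A" using A unfolding WW_def by blast
  have e: "elem_abelian_sub (G\<lparr>carrier := T\<rparr>) p A"
    using eA normal_imp_subgroup[OF n] unfolding elem_abelian_sub_def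
    by (simp add: nat_pow_consistent[symmetric])
  have c: "comm_elt_sub (G\<lparr>carrier := T\<rparr>) A s = {\<one>}"
    if s: "s \<in> T" and h: "comm_elt_sub (G\<lparr>carrier := T\<rparr>) (comm_elt_sub (G\<lparr>carrier := T\<rparr>) A s) s = {\<one>}" for s
  proof -
    have e1: "comm_elt_sub (G\<lparr>carrier := T\<rparr>) A s = comm_elt_sub G A s"
      using comm_elt_sub_consistent[OF T AT s] .
    have e2: "comm_elt_sub (G\<lparr>carrier := T\<rparr>) (comm_elt_sub G A s) s = comm_elt_sub G (comm_elt_sub G A s) s"
      using comm_elt_sub_consistent[OF T comm_elt_sub_in_subgroup[OF T AT s] s] .
    have sc: "s \<in> carrier G" using s T subgroup.subset by blast
    have "comm_elt_sub G (comm_elt_sub G A s) s = {\<one>}" using h e1 e2 by simp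
    then have "comm_elt_sub G A s = {\<one>}" using A sc unfolding WW_def by blast
    then show ?thesis using e1 by simp
  qed
  show ?thesis unfolding WW_def using n e c by simp
qed

end


theorem lemma2p12:
  fixes S :: "('a, 'b) monoid_scheme" and p :: nat
  assumes "p_group S p"
  shows "characteristic S (Wsub S p)
         \<and> (Wsub S p \<in> WW S p \<and> (\<forall>A\<in>WW S p. A \<subseteq> Wsub S p)
            \<and> (\<forall>B\<in>WW S p. (\<forall>A\<in>WW S p. A \<subseteq> B) \<longrightarrow> B = Wsub S p))
         \<and> OmegaP S p (center S) \<subseteq> Wsub S p
         \<and> (\<forall>T. subgroup T S \<and> Wsub S p \<subseteq> T \<longrightarrow> Wsub S p \<subseteq> Wsub (S\<lparr>carrier := T\<rparr>) p)"
proof -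
  have grp: "group S" and pr: "Factorial_Ring.prime p" and fin: "finite (carrier S)"
    using assms unfolding p_group_def by auto
  interpret group S by (rule grp)
  have M: "Wsub S p \<in> WW S p" and all: "\<forall>A\<in>WW S p. A \<subseteq> Wsub S p"
    using WW_max[OF fin] by auto
  have Wc: "Wsub S p \<subseteq> carrier S" using WW_carrier[OF M] .
  have ch: "characteristic S (Wsub S p)"
    unfolding characteristic_def
  proof (intro conjI ballI)
    show "subgroup (Wsub S p) S" by (rule normal_imp_subgroup[OF WW_normal[OF M]])
  next
    fix \<phi> assume phi: "\<phi> \<in> iso S S"
    have inj: "inj_on \<phi> (carrier S)" using phi unfolding iso_iff by auto
    have sub: "\<phi> ` Wsub S p \<subseteq> Wsub S p" by (rule bspec[OF all WW_iso[OF phi M]])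
    have finW: "finite (Wsub S p)" by (rule finite_subset[OF Wc fin])
    have "card (\<phi> ` Wsub S p) = card (Wsub S p)"
      using card_image[OF inj_on_subset[OF inj Wc]] .
    then show "\<phi> ` Wsub S p = Wsub S p" using card_subset_eq[OF finW sub] by simp
  qed
  have uniq: "\<forall>B\<in>WW S p. (\<forall>A\<in>WW S p. A \<subseteq> B) \<longrightarrow> B = Wsub S p"
  proof (intro ballI impI)
    fix B assume B: "B \<in> WW S p" and h: "\<forall>A\<in>WW S p. A \<subseteq> B"
    show "B = Wsub S p" by (rule subset_antisym[OF bspec[OF all B] bspec[OF h M]])
  qed
  have om: "OmegaP S p (center S) \<subseteq> Wsub S p"
    unfolding OmegaP_def by (rule bspec[OF all Omega_WW[OF pr]])
  have iv: "\<forall>T. subgroup T S \<and> Wsub S p \<subseteq> T \<longrightarrow> Wsub S p \<subseteq> Wsub (S\<lparr>carrier := T\<rparr>) p"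
  proof (intro allI impI)
    fix T assume T: "subgroup T S \<and> Wsub S p \<subseteq> T"
    have "Wsub S p \<in> WW (S\<lparr>carrier := T\<rparr>) p" using WW_restrict[OF conjunct1[OF T] M conjunct2[OF T]] .
    then show "Wsub S p \<subseteq> Wsub (S\<lparr>carrier := T\<rparr>) p" unfolding Wsub_def
      by (intro subsetI generate.incl UnionI)
  qed
  show ?thesis by (intro conjI ch M all uniq om iv)
qed


end
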